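(* Let $r,s,t,a,b,c$ be real numbers with $t\neq0$, and let $M_{H,n}^{(3)}$, $M_{h,n}^{(3)}$ be the matrix sequences defined in the context. Then for every $n\ge0$, $$\big(M_{H,n+1}^{(3)}\big)^{2}=\big(M_{H,1}^{(3)}\big)^{2}M_{h,2n}^{(3)}=M_{H,1}^{(3)}M_{H,2n+1}^{(3)},\qquad \big(M_{H,n+1}^{(3)}\big)^{3}=\big(M_{H,1}^{(3)}\big)^{3}M_{h,3n}^{(3)}=\big(M_{H,1}^{(3)}\big)^{2}M_{H,3n+1}^{(3)}.$$
   Context: The third-order Horadam matrix sequence is the sequence of $3\times3$ matrices defined by $M_{H,n+3}^{(3)}=rM_{H,n+2}^{(3)}+sM_{H,n+1}^{(3)}+tM_{H,n}^{(3)}$ ($n\ge0$) with $M_{H,0}^{(3)}=\begin{pmatrix} b & c-rb & ta\\ a & b-ra & c-rb-sa\\ \frac{1}{t}(c-rb-sa) & a-\frac{r}{t}(c-rb-sa) & \frac1t\big(-sc+(t+rs)b+(s^2-rt)a\big)\end{pmatrix}$, $M_{H,1}^{(3)}=\begin{pmatrix} c & sb+ta & tb\\ b & c-rb & ta\\ a & b-ra & c-rb-sa\end{pmatrix}$, $M_{H,2}^{(3)}=\begin{pmatrix} rc+sb+ta & sc+tb & tc\\ c & sb+ta & tb\\ b & c-rb & ta\end{pmatrix}$. The generalized Tribonacci matrix sequence satisfies the same recurrence with $M_{h,0}^{(3)}=I_3$, $M_{h,1}^{(3)}=\begin{pmatrix} r&s&t\\1&0&0\\0&1&0\end{pmatrix}$,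 $M_{h,2}^{(3)}=\begin{pmatrix} r^2+s&rs+t&rt\\ r&s&t\\ 1&0&0\end{pmatrix}$. *)

theory Defs
  imports "HOL-Analysis.Analysis"
begin

definition mat3 :: "real \<Rightarrow> real \<Rightarrow> real \<Rightarrow> real \<Rightarrow> real \<Rightarrow> real \<Rightarrow> real \<Rightarrow> real \<Rightarrow> real \<Rightarrow> real^3^3" where
  "mat3 a11 a12 a13 a21 a22 a23 a31 a32 a33 =
     vector [vector [a11, a12, a13], vector [a21, a22, a23], vector [a31, a32, a33]]"

fun MH :: "real \<Rightarrow> real \<Rightarrow> real \<Rightarrow> real \<Rightarrow> real \<Rightarrow> real \<Rightarrow> nat \<Rightarrow> real^3^3" where
  "MH r s t a b c 0 = mat3
      b (c - r * b) (t * a)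
      a (b - r * a) (c - r * b - s * a)
      ((c - r * b - s * a)/t) (a - (r/t)*(c - r * b - s * a)) ((-s * c + (t + r * s) * b + (s * s - r * t) * a)/t)"
| "MH r s t a b c (Suc 0) = mat3
      c (s * b + t * a) (t * b)
      b (c - r * b) (t * a)
      a (b - r * a) (c - r * b - s * a)"
| "MH r s t a b c (Suc (Suc 0)) = mat3
      (r * c + s * b + t * a) (s * c + t * b) (t * c)
      c (s * b + t * a) (t * b)
      b (c - r * b) (t * a)"
| "MH r s t a b c (Suc (Suc (Suc n))) =
      r *\<^sub>R MH r s t a b c (Suc (Suc n)) + s *\<^sub>R MH r s t a b c (Suc n) + t *\<^sub>R MH r s t a b c n"

fun Mh :: "real \<Rightarrow> real \<Rightarrow> real \<Rightarrow> nat \<Rightarrow> real^3^3" where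
  "Mh r s t 0 = mat 1"
| "Mh r s t (Suc 0) = mat3 r s t 1 0 0 0 1 0"
| "Mh r s t (Suc (Suc 0)) = mat3 (r * r + s) (r * s + t) (r * t) r s t 1 0 0"
| "Mh r s t (Suc (Suc (Suc n))) =
      r *\<^sub>R Mh r s t (Suc (Suc n)) + s *\<^sub>R Mh r s t (Suc n) + t *\<^sub>R Mh r s t n"

end

theory Submission
  imports Defs
begin

lemma mat3_eq: "mat3 a1 a2 a3 a4 a5 a6 a7 a8 a9 = mat3 b1 b2 b3 b4 b5 b6 b7 b8 b9 \<longleftrightarrow>
  a1=b1 \<and> a2=b2 \<and> a3=b3 \<and> a4=b4 \<and> a5=b5 \<and> a6=b6 \<and> a7=b7 \<and> a8=b8 \<and> a9=b9"
  by (simp add: mat3_def vec_eq_iff forall_3)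
lemma mat3_mult: "mat3 a1 a2 a3 a4 a5 a6 a7 a8 a9 ** mat3 b1 b2 b3 b4 b5 b6 b7 b8 b9 =
  mat3 (a1*b1+a2*b4+a3*b7) (a1*b2+a2*b5+a3*b8) (a1*b3+a2*b6+a3*b9)
       (a4*b1+a5*b4+a6*b7) (a4*b2+a5*b5+a6*b8) (a4*b3+a5*b6+a6*b9)
       (a7*b1+a8*b4+a9*b7) (a7*b2+a8*b5+a9*b8) (a7*b3+a8*b6+a9*b9)"
  by (simp add: mat3_def vec_eq_iff forall_3 matrix_matrix_mult_def sum_3)
lemma mat3_add: "mat3 a1 a2 a3 a4 a5 a6 a7 a8 a9 + mat3 b1 b2 b3 b4 b5 b6 b7 b8 b9 =
  mat3 (a1+b1) (a2+b2) (a3+b3) (a4+b4) (a5+b5) (a6+b6) (a7+b7) (a8+b8) (a9+b9)"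
  by (simp add: mat3_def vec_eq_iff forall_3)
lemma mat3_scale: "k *\<^sub>R mat3 a1 a2 a3 a4 a5 a6 a7 a8 a9 =
  mat3 (k*a1) (k*a2) (k*a3) (k*a4) (k*a5) (k*a6) (k*a7) (k*a8) (k*a9)"
  by (simp add: mat3_def vec_eq_iff forall_3)
lemma mat3_one: "mat 1 = mat3 1 0 0 0 1 0 0 0 1"
  by (simp add: mat3_def vec_eq_iff forall_3 mat_def)

lemmas m3 = mat3_eq mat3_mult mat3_add mat3_scale mat3_one

lemma rec_eq:
  fixes f g :: "nat \<Rightarrow> real^3^3"
  assumes "\<And>n. f (n+3) = r *\<^sub>R f (n+2) + s *\<^sub>R f (n+1) + t *\<^sub>R f n"
    and "\<And>n. g (n+3) = r *\<^sub>R g (n+2) + s *\<^sub>R g (n+1) + t *\<^sub>R g n"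
    and "f 0 = g 0" "f 1 = g 1" "f 2 = g 2"
  shows "f n = g n"
proof (induction n rule: less_induct)
  case (less n)
  show ?case
  proof (cases "n < 3")
    case True
    then have "n = 0 \<or> n = 1 \<or> n = 2" by auto
    then show ?thesis using assms by auto
  next
    case False
    then obtain m where m: "n = m + 3" by (metis add.commute less_imp_add_positive linorder_not_less
        le_add_diff_inverse)
    show ?thesis unfolding m assms(1,2) using less m by simp
  qed
qed

lemma rdistrib: "((A::real^3^3) + B) ** C = A ** C + B ** C"
  by (vector matrix_matrix_mult_def sum.distrib[symmetric] field_simps)

lemma mul_rec_right:
  fixes F :: "nat \<Rightarrow> real^3^3"
  assumes "\<And>n. F (n+3) = r *\<^sub>R F (n+2) + s *\<^sub>R F (n+1) + t *\<^sub>R F n"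
  shows "F (n+3) ** X = r *\<^sub>R (F (n+2) ** X) + s *\<^sub>R (F (n+1) ** X) + t *\<^sub>R (F n ** X)"
  unfolding assms rdistrib scalar_matrix_assoc ..

lemma mul_rec_left:
  fixes F :: "nat \<Rightarrow> real^3^3"
  assumes "\<And>n. F (n+3) = r *\<^sub>R F (n+2) + s *\<^sub>R F (n+1) + t *\<^sub>R F n"
  shows "X ** F (n+3) = r *\<^sub>R (X ** F (n+2)) + s *\<^sub>R (X ** F (n+1)) + t *\<^sub>R (X ** F n)"
  unfolding assms matrix_add_ldistrib matrix_scalar_ac scalar_matrix_assoc ..

lemma Mh_rec: "Mh r s t (n+3) = r *\<^sub>R Mh r s t (n+2) + s *\<^sub>R Mh r s t (n+1) + t *\<^sub>R Mh r s t n"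
  by (simp add: numeral_3_eq_3)

lemma MH_rec: "MH r s t a b c (n+3) = r *\<^sub>R MH r s t a b c (n+2) + s *\<^sub>R MH r s t a b c (n+1) + t *\<^sub>R MH r s t a b c n"
  by (simp add: numeral_3_eq_3)


lemma Mh_SucR: "Mh r s t (Suc n) = Mh r s t n ** Mh r s t 1"
proof -
  have h1: "Mh r s t (n+3+1) = r *\<^sub>R Mh r s t (n+2+1) + s *\<^sub>R Mh r s t (n+1+1) + t *\<^sub>R Mh r s t (n+1)" for n
    using Mh_rec[of r s t "n+1"] by (simp only: ac_simps)
  have h2: "\<And>n. Mh r s t (n+3) ** Mh r s t 1 = r *\<^sub>R (Mh r s t (n+2) ** Mh r s t 1) + s *\<^sub>R (Mh r s t (n+1) ** Mh r s t 1) + t *\<^sub>R (Mh r s t n ** Mh r s t 1)"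
    by (rule mul_rec_right, rule Mh_rec)
  have "Mh r s t (n+1) = Mh r s t n ** Mh r s t 1"
    apply (rule rec_eq[where f="\<lambda>n. Mh r s t (n+1)" and g="\<lambda>n. Mh r s t n ** Mh r s t 1", OF h1 h2])
      apply (simp_all add: m3 numeral_3_eq_3 numeral_2_eq_2)
      apply (simp_all add: algebra_simps)
    done
  then show ?thesis by simp
qed

lemma Mh_SucL: "Mh r s t (Suc n) = Mh r s t 1 ** Mh r s t n"
proof -
  have h1: "Mh r s t (n+3+1) = r *\<^sub>R Mh r s t (n+2+1) + s *\<^sub>R Mh r s t (n+1+1) + t *\<^sub>R Mh r s t (n+1)" for n
    using Mh_rec[of r s t "n+1"] by (simp only: ac_simps)
  have h2: "\<And>n. Mh r s t 1 ** Mh r s t (n+3) = r *\<^sub>R (Mh r s t 1 ** Mh r s t (n+2)) + s *\<^sub>R (Mh r s t 1 ** Mh r s t (n+1)) + t *\<^sub>R (Mh r s t 1 ** Mh r s t n)"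
    by (rule mul_rec_left, rule Mh_rec)
  have "Mh r s t (n+1) = Mh r s t 1 ** Mh r s t n"
    apply (rule rec_eq[where f="\<lambda>n. Mh r s t (n+1)" and g="\<lambda>n. Mh r s t 1 ** Mh r s t n", OF h1 h2])
      apply (simp_all add: m3 numeral_3_eq_3 numeral_2_eq_2)
    done
  then show ?thesis by simp
qed

lemma Mh_add: "Mh r s t (m+n) = Mh r s t m ** Mh r s t n"
proof (induction m)
  case 0
  then show ?case by simp
next
  case (Suc m)
  have "Mh r s t (Suc m + n) = Mh r s t 1 ** Mh r s t (m+n)" using Mh_SucL by simp
  also have "\<dots> = Mh r s t (Suc m) ** Mh r s t n" using Suc Mh_SucL[of r s t m] by (simp add: matrix_mul_assoc)
  finally show ?case .
qed

lemma MH_eq: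
  assumes "t \<noteq> 0"
  shows "MH r s t a b c n = MH r s t a b c 0 ** Mh r s t n"
proof -
  have h1: "MH r s t a b c (n+3) = r *\<^sub>R MH r s t a b c (n+2) + s *\<^sub>R MH r s t a b c (n+1) + t *\<^sub>R MH r s t a b c n" for n
    by (rule MH_rec)
  have h2: "\<And>n. MH r s t a b c 0 ** Mh r s t (n+3) = r *\<^sub>R (MH r s t a b c 0 ** Mh r s t (n+2)) + s *\<^sub>R (MH r s t a b c 0 ** Mh r s t (n+1)) + t *\<^sub>R (MH r s t a b c 0 ** Mh r s t n)"
    by (rule mul_rec_left, rule Mh_rec)
  show ?thesis
    apply (rule rec_eq[where f="\<lambda>n. MH r s t a b c n" and g="\<lambda>n. MH r s t a b c 0 ** Mh r s t n", OF h1 h2])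
      apply (simp_all add: m3 numeral_3_eq_3 numeral_2_eq_2)
      using assms apply (simp_all add: field_simps)
    done
qed

lemma MH_comm:
  assumes "t \<noteq> 0"
  shows "MH r s t a b c 0 ** Mh r s t n = Mh r s t n ** MH r s t a b c 0"
proof -
  have h1: "\<And>n. MH r s t a b c 0 ** Mh r s t (n+3) = r *\<^sub>R (MH r s t a b c 0 ** Mh r s t (n+2)) + s *\<^sub>R (MH r s t a b c 0 ** Mh r s t (n+1)) + t *\<^sub>R (MH r s t a b c 0 ** Mh r s t n)"
    by (rule mul_rec_left, rule Mh_rec)
  have h2: "\<And>n. Mh r s t (n+3) ** MH r s t a b c 0 = r *\<^sub>R (Mh r s t (n+2) ** MH r s t a b c 0) + s *\<^sub>R (Mh r s t (n+1) ** MH r s t a b c 0) + t *\<^sub>R (Mh r s t n ** MH r s t a b c 0)"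
    by (rule mul_rec_right, rule Mh_rec)
  show ?thesis
    apply (rule rec_eq[where f="\<lambda>n. MH r s t a b c 0 ** Mh r s t n" and g="\<lambda>n. Mh r s t n ** MH r s t a b c 0", OF h1 h2])
      apply (simp_all add: m3 numeral_3_eq_3 numeral_2_eq_2)
      using assms apply (simp_all add: field_simps)
    done
qed

lemma L_a:
  assumes "t \<noteq> 0"
  shows "(MH r s t a b c 0 ** Mh r s t i) ** (MH r s t a b c 0 ** Mh r s t j)
    = (MH r s t a b c 0 ** MH r s t a b c 0) ** Mh r s t (i+j)"
  by (metis MH_comm[OF assms] Mh_add matrix_mul_assoc)

lemma L_b:
  assumes "t \<noteq> 0"
  shows "((MH r s t a b c 0 ** MH r s t a b c 0) ** Mh r s t i) ** (MH r s t a b c 0 ** Mh r s t j)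
    = ((MH r s t a b c 0 ** MH r s t a b c 0) ** MH r s t a b c 0) ** Mh r s t (i+j)"
  by (metis MH_comm[OF assms] Mh_add matrix_mul_assoc)

lemma L_c: "(X ** Mh r s t i) ** Mh r s t j = X ** Mh r s t (i+j)"
  by (metis Mh_add matrix_mul_assoc)

theorem corollary3p4:
  fixes r s t a b c :: real and n :: nat
  assumes "t \<noteq> 0"
  shows "MH r s t a b c (n+1) ** MH r s t a b c (n+1)
           = (MH r s t a b c 1 ** MH r s t a b c 1) ** Mh r s t (2*n)
       \<and> (MH r s t a b c 1 ** MH r s t a b c 1) ** Mh r s t (2*n)
           = MH r s t a b c 1 ** MH r s t a b c (2*n+1)
       \<and> MH r s t a b c (n+1) ** MH r s t a b c (n+1) ** MH r s t a b c (n+1)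
           = (MH r s t a b c 1 ** MH r s t a b c 1 ** MH r s t a b c 1) ** Mh r s t (3*n)
       \<and> (MH r s t a b c 1 ** MH r s t a b c 1 ** MH r s t a b c 1) ** Mh r s t (3*n)
           = (MH r s t a b c 1 ** MH r s t a b c 1) ** MH r s t a b c (3*n+1)"
proof -
  note E = MH_eq[OF assms, of r s a b c "n+1"] MH_eq[OF assms, of r s a b c 1]
    MH_eq[OF assms, of r s a b c "2*n+1"] MH_eq[OF assms, of r s a b c "3*n+1"]
  show ?thesis
    unfolding E L_a[OF assms] L_b[OF assms] L_c
    by (intro conjI; rule arg_cong[where f="\<lambda>k. _ ** Mh r s t k"]; simp)
qed

end
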